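(* Consider a crash-only execution of Algorithm 1 with choose_leader given by Algorithm 2 (Carousel). Let $R$ be a round after GST such that no party crashes in any round from $R$ to $R+f+2$ (inclusive). Then there exists a round $r$ with $R\le r\le R+f+2$ for which there are $2f+1$ LBR-synchronized($\ell$) invocations with a leader $\ell$ that is alive at round $r$.
   Context: System model: $n$ parties $\Pi=\{p_1,\dots,p_n\}$, at most $f<n/3$ faulty. A party is crashed if it halts prematurely; Byzantine if it deviates from the protocol; honest if neither. Non-Byzantine parties follow the protocol until they (possibly) crash. An execution is crash-only if no party is Byzantine. Communication is eventually synchronous: there is an unknown global stabilization time (GST) after which every message arrives within a known bound $\delta$. Blocks: a block contains transactions, a link to a parent block (implied chain back to genesis), a round number, an author id, and a certificate from which a set of $2f+1$ endorsing parties can be obtained. certified$(B,r)$ is a local predicate saying $B$ has a valid certificate ($2f+1$ endorsements) for round $r$. $B\longrightarrow B'$ means $B$ is on $B'$'s implied chain. LBR abstraction: each party can invoke $LBR(r,\ell)$; non-Byzantine parties endorse a block with round $r$ and author $\ell$ only by calling $LBR(r,\ell)$. Every invocation returns within $\Delta_l>c\delta$ time ($c$ an implementation constant) a block with round number $r'\le r$. Round $r$ has $k$ LBR-synchronized($\ell$) invocations if $k$ honest parties invoke $LBR(r,\ell)$ after GST and their execution intervals share a common intersection of length at least $c\delta$. Guarantees: (Endorsement) if certified$(B,r)$ then $B$'s endorser set has $2f+1$ parties; (Agreement) any two certified blocks returned to honest parties by LBR satisfy $B\longrightarrow B'$ or $B'\longrightarrow B$; (Progress) if round $r$ has $k\ge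 2f+1$ LBR-synchronized($\ell$) invocations and $\ell$ is honest, they all return a certified block with round number $r$ authored by $\ell$; (Blocking) if a non-Byzantine $\ell$ never invokes $LBR(r,\ell)$, no $LBR(r,\ell)$ invocation returns a certified block formed in round $r$; (Reputation) if a non-Byzantine $p$ never invokes LBR for round $r$, no certified block with round number $r$ has $p$ among its endorsers. Pacemaker: produces new_round$(r)$ notifications at honest parties for every $r$; if all new_round$(r)$ notifications at non-Byzantine parties occur after GST, the first at $T_f$ and last at $T_l$, then $T_l-T_f\le\delta$ and no non-Byzantine party receives new_round$(r+1)$ before $T_l+\Delta_p$, where $\Delta_p=\Delta_l$. Algorithm 1 (party $p_i$): initially commit_head $:=$ genesis. Upon new_round$(r)$: leader $:=$ choose_leader$(r,$ commit_head$)$; $B:=LBR(r,\text{leader})$; if commit_head $\longrightarrow B$, commit $B$ (and all not-yet-committed blocks on its implied chain) and set commit_head $:=B$. Algorithm 2 (Carousel), choose_leader$(r,h)$: if the round number of $h$ is not $r-1$, return party $(r \bmod n)$. Otherwise let active be the endorser set of $h$; walking from $h$ along parent links, add block authors to last_authors while $|\text{last\_authors}|<f$ and the current block is not genesis; return a deterministically chosen element of active $\setminus$ last_authors. Terminology: a party crashes in round $r$ if $r+1$ is the smallest round number for which it does not invoke LBR in Algorithm 1; a party is alive at all rounds before the round in which it crashes. A round $r$ occurs after GST if all new_round$(r)$ notifications at honest parties occur after GST. *)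

theory Defs
  imports Main "HOL.Real"
begin

text \<open>Parties are the natural numbers below n.  A block universe of type 'b is
given by a genesis block, a parent link, a round number, an author id,
an endorser set (obtained from the certificate), and a validity flag for the
certificate.\<close>

record 'b blocks =
  genesis   :: 'b
  parent    :: "'b \<Rightarrow> 'b"
  rnd       :: "'b \<Rightarrow> nat"
  author    :: "'b \<Rightarrow> nat"
  endorsers :: "'b \<Rightarrow> nat set"
  certd     :: "'b \<Rightarrow> bool"

text \<open>B --> B': B lies on the implied chain of B' (reflexively).\<close>
definition chain :: "'b blocks \<Rightarrow> 'b \<Rightarrow> 'b \<Rightarrow> bool" where
  "chain Bs B B' \<longleftrightarrow> (\<exists>k. (parent Bs ^^ k) B' = B)"

definition certified :: "'b blocks \<Rightarrow> 'b \<Rightarrow> nat \<Rightarrow> bool" where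
  "certified Bs B r \<longleftrightarrow> certd Bs B \<and> rnd Bs B = r"

definition block_tree :: "'b blocks \<Rightarrow> nat \<Rightarrow> bool" where
  "block_tree Bs n \<longleftrightarrow> rnd Bs (genesis Bs) = 0 \<and> (\<forall>B. chain Bs (genesis Bs) B)
     \<and> (\<forall>B. certd Bs B \<longrightarrow> author Bs B < n \<and> endorsers Bs B \<subseteq> {..<n})"

fun walk :: "'b blocks \<Rightarrow> nat \<Rightarrow> nat \<Rightarrow> 'b \<Rightarrow> nat set \<Rightarrow> nat set" where
  "walk Bs f 0 b S = S"
| "walk Bs f (Suc k) b S =
     (if card S < f \<and> b \<noteq> genesis Bs
      then walk Bs f k (parent Bs b) (insert (author Bs b) S) else S)"

definition dist_genesis :: "'b blocks \<Rightarrow> 'b \<Rightarrow> nat" where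
  "dist_genesis Bs h = (LEAST k. (parent Bs ^^ k) h = genesis Bs)"

definition last_authors :: "'b blocks \<Rightarrow> nat \<Rightarrow> 'b \<Rightarrow> nat set" where
  "last_authors Bs f h = walk Bs f (dist_genesis Bs h) h {}"

text \<open>choose_leader(r,h); pick is the deterministic choice function.\<close>
definition carousel :: "nat \<Rightarrow> nat \<Rightarrow> (nat set \<Rightarrow> nat) \<Rightarrow> 'b blocks \<Rightarrow> nat \<Rightarrow> 'b \<Rightarrow> nat" where
  "carousel n f pick Bs r h =
     (if rnd Bs h \<noteq> r - 1 then r mod n
      else pick (endorsers Bs h - last_authors Bs f h))"

text \<open>An execution: invokes p r = party p invokes LBR in round r (in Algorithm 1);
leader p r = the leader argument of that invocation; result p r = the returned block;
nr_time p r = time of the new_round(r) notification at p (= invocation time);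
ret_time p r = time the invocation returns.  Rounds are numbered from 1.\<close>
record 'b lbr_exec =
  invokes  :: "nat \<Rightarrow> nat \<Rightarrow> bool"
  leader   :: "nat \<Rightarrow> nat \<Rightarrow> nat"
  result   :: "nat \<Rightarrow> nat \<Rightarrow> 'b"
  nr_time  :: "nat \<Rightarrow> nat \<Rightarrow> real"
  ret_time :: "nat \<Rightarrow> nat \<Rightarrow> real"

record timing =
  GST     :: real
  delta   :: real
  Delta_l :: real
  cconst  :: real

text \<open>commit_head of p at the beginning of its round-r handler.\<close>
primrec chead :: "'b blocks \<Rightarrow> 'b lbr_exec \<Rightarrow> nat \<Rightarrow> nat \<Rightarrow> 'b" where
  "chead Bs E p 0 = genesis Bs"
| "chead Bs E p (Suc r) =
     (if r = 0 then genesis Bs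
      else if chain Bs (chead Bs E p r) (result E p r) then result E p r
      else chead Bs E p r)"

definition honest :: "'b lbr_exec \<Rightarrow> nat \<Rightarrow> bool" where
  "honest E p \<longleftrightarrow> (\<forall>r\<ge>1. invokes E p r)"

definition crashes_in :: "'b lbr_exec \<Rightarrow> nat \<Rightarrow> nat \<Rightarrow> bool" where
  "crashes_in E p r \<longleftrightarrow> (\<forall>r'. 1 \<le> r' \<and> r' \<le> r \<longrightarrow> invokes E p r') \<and> \<not> invokes E p (Suc r)"

definition alive :: "'b lbr_exec \<Rightarrow> nat \<Rightarrow> nat \<Rightarrow> bool" where
  "alive E p r \<longleftrightarrow> (\<forall>r'. 1 \<le> r' \<and> r' \<le> Suc r \<longrightarrow> invokes E p r')"

definition crash_only :: "nat \<Rightarrow> nat \<Rightarrow> 'b lbr_exec \<Rightarrow> bool" where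
  "crash_only n f E \<longleftrightarrow>
     (\<forall>p r r'. 1 \<le> r' \<longrightarrow> r' \<le> r \<longrightarrow> invokes E p r \<longrightarrow> invokes E p r')
     \<and> card {p. p < n \<and> \<not> honest E p} \<le> f"

definition algorithm1 :: "nat \<Rightarrow> nat \<Rightarrow> (nat set \<Rightarrow> nat) \<Rightarrow> 'b blocks \<Rightarrow> 'b lbr_exec \<Rightarrow> bool" where
  "algorithm1 n f pick Bs E \<longleftrightarrow>
     (\<forall>p<n. \<forall>r\<ge>1. invokes E p r \<longrightarrow>
        leader E p r = carousel n f pick Bs r (chead Bs E p r))"

definition round_after_GST :: "nat \<Rightarrow> timing \<Rightarrow> 'b lbr_exec \<Rightarrow> nat \<Rightarrow> bool" where
  "round_after_GST n T E r \<longleftrightarrow> (\<forall>p<n. invokes E p r \<longrightarrow> GST T < nr_time E p r)"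

definition lbr_sync :: "nat \<Rightarrow> timing \<Rightarrow> 'b lbr_exec \<Rightarrow> (nat \<Rightarrow> bool) \<Rightarrow> nat \<Rightarrow> nat \<Rightarrow> nat set \<Rightarrow> bool" where
  "lbr_sync n T E Q r l S \<longleftrightarrow>
     S \<subseteq> {p. p < n \<and> Q p}
     \<and> (\<forall>p\<in>S. invokes E p r \<and> leader E p r = l \<and> GST T < nr_time E p r)
     \<and> (\<exists>a. \<forall>p\<in>S. nr_time E p r \<le> a \<and> a + cconst T * delta T \<le> nr_time E p (Suc r))"

definition lbr_spec :: "nat \<Rightarrow> nat \<Rightarrow> 'b blocks \<Rightarrow> timing \<Rightarrow> 'b lbr_exec \<Rightarrow> bool" where
  "lbr_spec n f Bs T E \<longleftrightarrow>
     \<comment> \<open>returns within Delta_l a (certified, or genesis) block with round number at most r\<close>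
     (\<forall>p<n. \<forall>r\<ge>1. invokes E p r \<longrightarrow>
        nr_time E p r \<le> ret_time E p r \<and> ret_time E p r \<le> nr_time E p r + Delta_l T
        \<and> rnd Bs (result E p r) \<le> r
        \<and> (certified Bs (result E p r) (rnd Bs (result E p r)) \<or> result E p r = genesis Bs))
     \<comment> \<open>endorsing a block of round r and author l only by calling LBR(r,l)\<close>
   \<and> (\<forall>B r p. r \<ge> 1 \<longrightarrow> certified Bs B r \<longrightarrow> p \<in> endorsers Bs B \<longrightarrow>
        invokes E p r \<and> leader E p r = author Bs B)
     \<comment> \<open>Endorsement\<close>
   \<and> (\<forall>B r. certified Bs B r \<longrightarrow> endorsers Bs B \<subseteq> {..<n} \<and> card (endorsers Bs B) = 2*f+1)
     \<comment> \<open>Agreement\<close>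
   \<and> (\<forall>p q r r'. p < n \<longrightarrow> q < n \<longrightarrow> honest E p \<longrightarrow> honest E q \<longrightarrow> r \<ge> 1 \<longrightarrow> r' \<ge> 1 \<longrightarrow>
        certd Bs (result E p r) \<longrightarrow> certd Bs (result E q r') \<longrightarrow>
        chain Bs (result E p r) (result E q r') \<or> chain Bs (result E q r') (result E p r))
     \<comment> \<open>Progress\<close>
   \<and> (\<forall>r l S. r \<ge> 1 \<longrightarrow> l < n \<longrightarrow> honest E l \<longrightarrow> 2*f+1 \<le> card S \<longrightarrow>
        lbr_sync n T E (honest E) r l S \<longrightarrow>
        (\<forall>p\<in>S. certified Bs (result E p r) r \<and> author Bs (result E p r) = l))
     \<comment> \<open>Blocking\<close>
   \<and> (\<forall>l<n. \<forall>r\<ge>1. \<not> (invokes E l r \<and> leader E l r = l) \<longrightarrow>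
        (\<forall>p<n. invokes E p r \<and> leader E p r = l \<longrightarrow> \<not> certified Bs (result E p r) r))
     \<comment> \<open>Reputation\<close>
   \<and> (\<forall>p<n. \<forall>r\<ge>1. \<not> invokes E p r \<longrightarrow> (\<forall>B. certified Bs B r \<longrightarrow> p \<notin> endorsers Bs B))"

text \<open>Pacemaker, with Delta_p = Delta_l.\<close>
definition pacemaker :: "nat \<Rightarrow> timing \<Rightarrow> 'b lbr_exec \<Rightarrow> bool" where
  "pacemaker n T E \<longleftrightarrow>
     (\<forall>r\<ge>1. round_after_GST n T E r \<longrightarrow>
        (\<forall>p<n. \<forall>q<n. invokes E p r \<longrightarrow> invokes E q r \<longrightarrow> nr_time E p r - nr_time E q r \<le> delta T)
      \<and> (\<forall>p<n. \<forall>q<n. invokes E p (Suc r) \<longrightarrow> invokes E q r \<longrightarrow>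
           nr_time E q r + Delta_l T \<le> nr_time E p (Suc r)))"

end

theory Submission
  imports Defs
begin

lemma walk_card:
  "finite S \<Longrightarrow> card S \<le> f \<Longrightarrow> finite (walk Bs f k b S) \<and> card (walk Bs f k b S) \<le> f"
proof (induction k arbitrary: b S)
  case 0
  then show ?case by simp
next
  case (Suc k)
  show ?case
  proof (cases "card S < f \<and> b \<noteq> genesis Bs")
    case True
    have "finite (insert (author Bs b) S)" using Suc.prems by simp
    moreover have "card (insert (author Bs b) S) \<le> f"
      using True Suc.prems by (simp add: card_insert_if)
    ultimately show ?thesis using Suc.IH True by simp
  next
    case False
    then show ?thesis using Suc.prems by auto
  qed
qed

lemma last_authors_card:
  "finite (last_authors Bs f h) \<and> card (last_authors Bs f h) \<le> f"
  unfolding last_authors_def using walk_card[of "{}" f] by simp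

lemma chead_form:
  "chead Bs E p r = genesis Bs \<or> (\<exists>r'. 1 \<le> r' \<and> r' < r \<and> chead Bs E p r = result E p r')"
proof (induction r)
  case 0
  then show ?case by simp
next
  case (Suc r)
  show ?case
  proof (cases "r = 0")
    case True
    then show ?thesis by simp
  next
    case False
    show ?thesis
    proof (cases "chain Bs (chead Bs E p r) (result E p r)")
      case True
      then have "chead Bs E p (Suc r) = result E p r" using False by simp
      moreover have "1 \<le> r" "r < Suc r" using False by auto
      ultimately show ?thesis by blast
    next
      case nc: False
      then have "chead Bs E p (Suc r) = chead Bs E p r" using False by simp
      then show ?thesis using Suc.IH less_SucI by auto
    qed
  qed
qed

theorem lemma4:
  fixes Bs :: "'b blocks" and E :: "'b lbr_exec" and T :: timing
    and pick :: "nat set \<Rightarrow> nat" and n f R :: nat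
  assumes "3 * f < n"
    and "0 < delta T" and "0 < cconst T" and "cconst T * delta T < Delta_l T"
    and "block_tree Bs n"
    and "\<forall>S. S \<noteq> {} \<longrightarrow> pick S \<in> S"
    and "crash_only n f E"
    and "algorithm1 n f pick Bs E"
    and "lbr_spec n f Bs T E"
    and "pacemaker n T E"
    and "1 \<le> R" and "round_after_GST n T E R"
    and "\<forall>p<n. \<forall>r. R \<le> r \<and> r \<le> R + f + 2 \<longrightarrow> \<not> crashes_in E p r"
  shows "\<exists>r l S. R \<le> r \<and> r \<le> R + f + 2 \<and> l < n \<and> alive E l r
            \<and> card S = 2 * f + 1 \<and> lbr_sync n T E (\<lambda>p. alive E p r) r l S"
proof -
  define A where "A = {p. p < n \<and> invokes E p R}"
  have CO: "(\<forall>p r r'. 1 \<le> r' \<longrightarrow> r' \<le> r \<longrightarrow> invokes E p r \<longrightarrow> invokes E p r')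
     \<and> card {p. p < n \<and> \<not> honest E p} \<le> f"
    using assms(7) unfolding crash_only_def .
  have co_down: "\<And>p r r'. 1 \<le> r' \<Longrightarrow> r' \<le> r \<Longrightarrow> invokes E p r \<Longrightarrow> invokes E p r'"
    using CO by blast
  have cardH: "card {p. p < n \<and> \<not> honest E p} \<le> f"
    using CO by blast
  have BT: "rnd Bs (genesis Bs) = 0 \<and> (\<forall>B. chain Bs (genesis Bs) B)
     \<and> (\<forall>B. certd Bs B \<longrightarrow> author Bs B < n \<and> endorsers Bs B \<subseteq> {..<n})"
    using assms(5) unfolding block_tree_def .
  have gen0: "rnd Bs (genesis Bs) = 0" using BT by blast
  note LS = assms(9)[unfolded lbr_spec_def]
  have LS1: "\<And>p r. p < n \<Longrightarrow> 1 \<le> r \<Longrightarrow> invokes E p r \<Longrightarrow>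
        rnd Bs (result E p r) \<le> r
        \<and> (certified Bs (result E p r) (rnd Bs (result E p r)) \<or> result E p r = genesis Bs)"
    using LS[THEN conjunct1] by simp
  have LS2: "\<And>B r p. 1 \<le> r \<Longrightarrow> certified Bs B r \<Longrightarrow> p \<in> endorsers Bs B \<Longrightarrow>
        invokes E p r \<and> leader E p r = author Bs B"
    using LS[THEN conjunct2, THEN conjunct1] by simp
  have LS3: "\<And>B r. certified Bs B r \<Longrightarrow> endorsers Bs B \<subseteq> {..<n} \<and> card (endorsers Bs B) = 2*f+1"
    using LS[THEN conjunct2, THEN conjunct2, THEN conjunct1] by blast
  have LSB: "\<And>l r p. l < n \<Longrightarrow> 1 \<le> r \<Longrightarrow> \<not> (invokes E l r \<and> leader E l r = l) \<Longrightarrow>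
        p < n \<Longrightarrow> invokes E p r \<Longrightarrow> leader E p r = l \<Longrightarrow> \<not> certified Bs (result E p r) r"
    using LS[THEN conjunct2, THEN conjunct2, THEN conjunct2, THEN conjunct2, THEN conjunct2, THEN conjunct1] by simp
  have PM0: "\<forall>r\<ge>1. round_after_GST n T E r \<longrightarrow>
        (\<forall>p<n. \<forall>q<n. invokes E p r \<longrightarrow> invokes E q r \<longrightarrow> nr_time E p r - nr_time E q r \<le> delta T)
      \<and> (\<forall>p<n. \<forall>q<n. invokes E p (Suc r) \<longrightarrow> invokes E q r \<longrightarrow>
           nr_time E q r + Delta_l T \<le> nr_time E p (Suc r))"
    using assms(10) unfolding pacemaker_def .
  have PM: "\<And>r p q. 1 \<le> r \<Longrightarrow> round_after_GST n T E r \<Longrightarrow> p < n \<Longrightarrow> q < n \<Longrightarrow>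
        invokes E p (Suc r) \<Longrightarrow> invokes E q r \<Longrightarrow> nr_time E q r + Delta_l T \<le> nr_time E p (Suc r)"
    using PM0 by simp
  have ALG0: "\<forall>p<n. \<forall>r\<ge>1. invokes E p r \<longrightarrow>
        leader E p r = carousel n f pick Bs r (chead Bs E p r)"
    using assms(8) unfolding algorithm1_def .
  have ALG: "\<And>p r. p < n \<Longrightarrow> 1 \<le> r \<Longrightarrow> invokes E p r \<Longrightarrow>
        leader E p r = carousel n f pick Bs r (chead Bs E p r)"
    using ALG0 by simp
  have Dpos: "0 < Delta_l T" using assms(2,3,4) mult_pos_pos[of "cconst T" "delta T"] by linarith
  have npos: "0 < n" using assms(1) by simp

  have invA: "\<And>p r. p \<in> A \<Longrightarrow> 1 \<le> r \<Longrightarrow> r \<le> R + f + 3 \<Longrightarrow> invokes E p r"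
  proof -
    fix p r assume pA: "p \<in> A" and r1: "1 \<le> r" and r2: "r \<le> R + f + 3"
    have pn: "p < n" using pA A_def by simp
    have all: "\<forall>k. k \<le> f + 3 \<longrightarrow> invokes E p (R + k)"
    proof
      fix k show "k \<le> f + 3 \<longrightarrow> invokes E p (R + k)"
      proof (induction k)
        case 0 then show ?case using pA A_def by simp
      next
        case (Suc k)
        show ?case
        proof
          assume k: "Suc k \<le> f + 3"
          then have iv: "invokes E p (R + k)" using Suc.IH by simp
          have "\<not> crashes_in E p (R + k)" using assms(13) pn k by auto
          moreover have "\<forall>r'. 1 \<le> r' \<and> r' \<le> R + k \<longrightarrow> invokes E p r'" using co_down iv by blast
          ultimately show "invokes E p (R + Suc k)" unfolding crashes_in_def by simp
        qed
      qed
    qed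
    show "invokes E p r"
    proof (cases "r \<le> R")
      case True
      then show ?thesis using co_down[OF r1 True] pA A_def by simp
    next
      case False
      then have "r = R + (r - R)" "r - R \<le> f + 3" using r2 by auto
      then show ?thesis using all by metis
    qed
  qed
  have memA: "\<And>p r. p < n \<Longrightarrow> R \<le> r \<Longrightarrow> invokes E p r \<Longrightarrow> p \<in> A"
    unfolding A_def using co_down assms(11) by blast
  have aliveA: "\<And>p r. p \<in> A \<Longrightarrow> r \<le> R + f + 2 \<Longrightarrow> alive E p r"
    unfolding alive_def using invA by simp
  have finA: "finite A" unfolding A_def by simp
  have cardA: "2 * f + 1 \<le> card A"
  proof -
    have sub: "{p. p < n \<and> honest E p} \<subseteq> A"
      unfolding A_def honest_def using assms(11) by blast
    have eq: "{p. p < n \<and> honest E p} = {..<n} - {p. p < n \<and> \<not> honest E p}" by auto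
    have "card {p. p < n \<and> honest E p} = n - card {p. p < n \<and> \<not> honest E p}"
      unfolding eq by (subst card_Diff_subset) auto
    then have "n - f \<le> card {p. p < n \<and> honest E p}" using cardH by simp
    moreover have "card {p. p < n \<and> honest E p} \<le> card A" using card_mono[OF finA sub] .
    ultimately show ?thesis using assms(1) by simp
  qed

  have GSTr: "\<And>r. R \<le> r \<Longrightarrow> round_after_GST n T E r"
  proof -
    fix r assume "R \<le> r"
    then show "round_after_GST n T E r"
    proof (induction r rule: dec_induct)
      case base
      then show ?case using assms(12) .
    next
      case (step r)
      show ?case unfolding round_after_GST_def
      proof (intro allI impI)
        fix p assume pn: "p < n" and iv: "invokes E p (Suc r)"
        have r1: "1 \<le> r" using step.hyps assms(11) by simp
        have ivr: "invokes E p r" using co_down[OF r1 _ iv] by simp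
        have "GST T < nr_time E p r" using step.IH pn ivr unfolding round_after_GST_def by blast
        moreover have "nr_time E p r + Delta_l T \<le> nr_time E p (Suc r)"
          using PM[OF r1 step.IH pn pn iv ivr] .
        ultimately show "GST T < nr_time E p (Suc r)" using Dpos by simp
      qed
    qed
  qed

  define good where "good r \<longleftrightarrow> (\<exists>l\<in>A. \<exists>S\<subseteq>A. card S = 2 * f + 1 \<and> (\<forall>p\<in>S. leader E p r = l))" for r

  have good_concl: "\<And>r. R \<le> r \<Longrightarrow> r \<le> R + f + 2 \<Longrightarrow> good r \<Longrightarrow> ?thesis"
  proof -
    fix r assume r1: "R \<le> r" and r2: "r \<le> R + f + 2" and g: "good r"
    then obtain l S where lA: "l \<in> A" and SA: "S \<subseteq> A" and cS: "card S = 2 * f + 1"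
      and lead: "\<forall>p\<in>S. leader E p r = l" unfolding good_def by blast
    have finS: "finite S" using SA finA finite_subset by blast
    have neS: "S \<noteq> {}" using cS by auto
    have ra: "1 \<le> r" using r1 assms(11) by simp
    have gst: "round_after_GST n T E r" using GSTr r1 .
    define a where "a = Max ((\<lambda>p. nr_time E p r) ` S)"
    have age: "\<And>p. p \<in> S \<Longrightarrow> nr_time E p r \<le> a" unfolding a_def using finS by simp
    have "a \<in> (\<lambda>p. nr_time E p r) ` S" unfolding a_def using finS neS by simp
    then obtain q where qS: "q \<in> S" and aq: "a = nr_time E q r" by blast
    have sync: "\<forall>p\<in>S. nr_time E p r \<le> a \<and> a + cconst T * delta T \<le> nr_time E p (Suc r)"
    proof
      fix p assume pS: "p \<in> S"
      have pA: "p \<in> A" and qA: "q \<in> A" using pS qS SA by auto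
      have "nr_time E q r + Delta_l T \<le> nr_time E p (Suc r)"
        using PM[OF ra gst, of p q] pA qA invA[OF pA, of "Suc r"] invA[OF qA, of r] r2 ra
        unfolding A_def by simp
      then show "nr_time E p r \<le> a \<and> a + cconst T * delta T \<le> nr_time E p (Suc r)"
        using age[OF pS] aq assms(4) by simp
    qed
    have "lbr_sync n T E (\<lambda>p. alive E p r) r l S"
      unfolding lbr_sync_def
    proof (intro conjI)
      show "S \<subseteq> {p. p < n \<and> alive E p r}" using SA aliveA r2 unfolding A_def by auto
      show "\<forall>p\<in>S. invokes E p r \<and> leader E p r = l \<and> GST T < nr_time E p r"
      proof
        fix p assume pS: "p \<in> S"
        then have pA: "p \<in> A" using SA by auto
        have iv: "invokes E p r" using invA[OF pA ra] r2 by simp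
        moreover have "GST T < nr_time E p r" using gst iv pA unfolding round_after_GST_def A_def by blast
        ultimately show "invokes E p r \<and> leader E p r = l \<and> GST T < nr_time E p r"
          using lead pS by simp
      qed
      show "\<exists>a. \<forall>p\<in>S. nr_time E p r \<le> a \<and> a + cconst T * delta T \<le> nr_time E p (Suc r)"
        using sync by blast
    qed
    moreover have "l < n" "alive E l r" using lA aliveA r2 unfolding A_def by auto
    ultimately show "\<exists>r l S. R \<le> r \<and> r \<le> R + f + 2 \<and> l < n \<and> alive E l r
            \<and> card S = 2 * f + 1 \<and> lbr_sync n T E (\<lambda>p. alive E p r) r l S"
      using r1 r2 cS by blast
  qed

  have good_agree: "\<And>r l. l \<in> A \<Longrightarrow> (\<forall>p\<in>A. leader E p r = l) \<Longrightarrow> good r"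
  proof -
    fix r l assume lA: "l \<in> A" and ag: "\<forall>p\<in>A. leader E p r = l"
    obtain S where "S \<subseteq> A" "card S = 2 * f + 1" using obtain_subset_with_card_n[OF cardA] by blast
    then show "good r" unfolding good_def using lA ag by blast
  qed

  have good_cert: "\<And>B t. R \<le> t \<Longrightarrow> certified Bs B t \<Longrightarrow> author Bs B \<in> A \<Longrightarrow> good t"
  proof -
    fix B t assume t: "R \<le> t" and c: "certified Bs B t" and aA: "author Bs B \<in> A"
    have t1: "1 \<le> t" using t assms(11) by simp
    have "endorsers Bs B \<subseteq> A"
    proof
      fix e assume e: "e \<in> endorsers Bs B"
      have "e < n" using LS3[OF c] e by auto
      then show "e \<in> A" using memA t LS2[OF t1 c e] by blast
    qed
    moreover have "\<forall>e\<in>endorsers Bs B. leader E e t = author Bs B" using LS2[OF t1 c] by blast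
    ultimately show "good t" unfolding good_def using LS3[OF c] aA by blast
  qed

  have chead_props: "\<And>p r. p \<in> A \<Longrightarrow> 1 \<le> r \<Longrightarrow> r \<le> R + f + 3 \<Longrightarrow>
      rnd Bs (chead Bs E p r) < r \<and>
      (chead Bs E p r = genesis Bs \<or> certified Bs (chead Bs E p r) (rnd Bs (chead Bs E p r)))"
  proof -
    fix p r assume pA: "p \<in> A" and r1: "1 \<le> r" and r2: "r \<le> R + f + 3"
    have pn: "p < n" using pA A_def by simp
    from chead_form[of Bs E p r]
    show "rnd Bs (chead Bs E p r) < r \<and>
      (chead Bs E p r = genesis Bs \<or> certified Bs (chead Bs E p r) (rnd Bs (chead Bs E p r)))"
    proof
      assume "chead Bs E p r = genesis Bs"
      then show ?thesis using gen0 r1 by simp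
    next
      assume "\<exists>r'. 1 \<le> r' \<and> r' < r \<and> chead Bs E p r = result E p r'"
      then obtain r' where a: "1 \<le> r'" "r' < r" "chead Bs E p r = result E p r'" by blast
      have "invokes E p r'" using invA[OF pA a(1)] a(2) r2 by simp
      then show ?thesis using LS1[OF pn a(1)] a by auto
    qed
  qed

  have leadL: "\<And>p t. p \<in> A \<Longrightarrow> R + 1 \<le> t \<Longrightarrow> t \<le> R + f + 2 \<Longrightarrow>
      leader E p t \<in> A \<or> leader E p t = t mod n"
  proof -
    fix p t assume pA: "p \<in> A" and t1: "R + 1 \<le> t" and t2: "t \<le> R + f + 2"
    have pn: "p < n" using pA A_def by simp
    have tt: "1 \<le> t" using t1 by simp
    have L: "leader E p t = carousel n f pick Bs t (chead Bs E p t)"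
      using ALG[OF pn tt] invA[OF pA tt] t2 by simp
    define h where "h = chead Bs E p t"
    show "leader E p t \<in> A \<or> leader E p t = t mod n"
    proof (cases "rnd Bs h = t - 1")
      case False
      then show ?thesis using L unfolding carousel_def h_def by simp
    next
      case True
      have "h = genesis Bs \<or> certified Bs h (rnd Bs h)" using chead_props[OF pA tt] t2 unfolding h_def by simp
      moreover have "h \<noteq> genesis Bs" using True gen0 t1 assms(11) by auto
      ultimately have c: "certified Bs h (t - 1)" using True by simp
      have t1': "1 \<le> t - 1" using t1 assms(11) by simp
      define La where "La = last_authors Bs f h"
      have fL: "finite La" and cL: "card La \<le> f" using last_authors_card[of Bs f h] unfolding La_def by auto
      have ne: "endorsers Bs h - La \<noteq> {}"
      proof
        assume "endorsers Bs h - La = {}"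
        then have "endorsers Bs h \<subseteq> La" by blast
        then have "card (endorsers Bs h) \<le> card La" using card_mono fL by blast
        then show False using LS3[OF c] cL by simp
      qed
      have "leader E p t = pick (endorsers Bs h - La)"
        using L True unfolding carousel_def h_def La_def by simp
      moreover have "pick (endorsers Bs h - La) \<in> endorsers Bs h - La" using assms(6)[rule_format, OF ne] .
      ultimately have e: "leader E p t \<in> endorsers Bs h" by simp
      have "leader E p t < n" using LS3[OF c] e by auto
      moreover have "invokes E (leader E p t) (t - 1)" using LS2[OF t1' c e] by simp
      moreover have "R \<le> t - 1" using t1 by simp
      ultimately have "leader E p t \<in> A" using memA by blast
      then show ?thesis by simp
    qed
  qed

  define noCert where "noCert t \<longleftrightarrow> (\<forall>q\<in>A. \<not> certified Bs (result E q t) t)" for t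

  have lemY: "\<And>t. R \<le> t \<Longrightarrow> t \<le> R + f + 1 \<Longrightarrow> noCert t \<Longrightarrow>
      \<forall>p\<in>A. leader E p (Suc t) = Suc t mod n"
  proof (intro ballI)
    fix t p assume t1: "R \<le> t" and t2: "t \<le> R + f + 1" and nc: "noCert t" and pA: "p \<in> A"
    have pn: "p < n" using pA A_def by simp
    have tt: "1 \<le> t" using t1 assms(11) by simp
    have L: "leader E p (Suc t) = carousel n f pick Bs (Suc t) (chead Bs E p (Suc t))"
      using ALG[OF pn] invA[OF pA, of "Suc t"] t2 by simp
    have hc: "chead Bs E p (Suc t) = result E p t \<or> chead Bs E p (Suc t) = chead Bs E p t"
      using tt by auto
    have "rnd Bs (chead Bs E p (Suc t)) \<noteq> t"
      using hc
    proof
      assume h: "chead Bs E p (Suc t) = result E p t"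
      have iv: "invokes E p t" using invA[OF pA tt] t2 by simp
      show ?thesis
      proof
        assume rt: "rnd Bs (chead Bs E p (Suc t)) = t"
        then have "result E p t \<noteq> genesis Bs" using h gen0 tt by auto
        then have "certified Bs (result E p t) t" using LS1[OF pn tt iv] rt h by auto
        then show False using nc pA unfolding noCert_def by blast
      qed
    next
      assume "chead Bs E p (Suc t) = chead Bs E p t"
      then show ?thesis using chead_props[OF pA tt] t2 by simp
    qed
    then show "leader E p (Suc t) = Suc t mod n" using L unfolding carousel_def by simp
  qed

  have lemX: "\<And>t. R + 1 \<le> t \<Longrightarrow> t \<le> R + f + 2 \<Longrightarrow> \<not> good t \<Longrightarrow> t mod n \<in> A \<Longrightarrow> noCert t"
  proof -
    fix t assume t1: "R + 1 \<le> t" and t2: "t \<le> R + f + 2" and ng: "\<not> good t" and mA: "t mod n \<in> A"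
    show "noCert t" unfolding noCert_def
    proof (intro ballI notI)
      fix q assume qA: "q \<in> A" and c: "certified Bs (result E q t) t"
      define B where "B = result E q t"
      have cB: "certified Bs B t" using c B_def by simp
      have tt: "1 \<le> t" using t1 by simp
      have "endorsers Bs B \<noteq> {}" using LS3[OF cB] by auto
      then obtain e where e: "e \<in> endorsers Bs B" by blast
      have en: "e < n" using LS3[OF cB] e by auto
      have ie: "invokes E e t \<and> leader E e t = author Bs B" using LS2[OF tt cB e] .
      have eA: "e \<in> A" using memA[OF en _ ie[THEN conjunct1]] t1 by simp
      have "author Bs B \<in> A" using leadL[OF eA t1 t2] ie mA by auto
      then have "good t" using good_cert[OF _ cB] t1 by simp
      then show False using ng by simp
    qed
  qed

  have lemZ: "\<And>t. R \<le> t \<Longrightarrow> t \<le> R + f + 2 \<Longrightarrow> \<not> good t \<Longrightarrow>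
      (\<forall>p\<in>A. leader E p t = t mod n) \<Longrightarrow> noCert t"
  proof -
    fix t assume t1: "R \<le> t" and t2: "t \<le> R + f + 2" and ng: "\<not> good t"
      and ag: "\<forall>p\<in>A. leader E p t = t mod n"
    have tt: "1 \<le> t" using t1 assms(11) by simp
    have mA: "t mod n \<notin> A" using good_agree ag ng by blast
    have mn: "t mod n < n" using npos by simp
    have ni: "\<not> invokes E (t mod n) t" using memA[OF mn t1] mA by blast
    show "noCert t" unfolding noCert_def
    proof (intro ballI)
      fix q assume qA: "q \<in> A"
      have qn: "q < n" using qA A_def by simp
      have iq: "invokes E q t" using invA[OF qA tt] t2 by simp
      have lq: "leader E q t = t mod n" using ag qA by blast
      show "\<not> certified Bs (result E q t) t"
        by (rule LSB[OF mn tt _ qn iq lq]) (use ni in blast)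
    qed
  qed

  show ?thesis
  proof (rule ccontr)
    assume nt: "\<not> ?thesis"
    have ng: "\<And>t. R \<le> t \<Longrightarrow> t \<le> R + f + 2 \<Longrightarrow> \<not> good t" using good_concl nt by blast
    define I where "I = {R + 1..R + f + 2}"
    define G where "G = {s\<in>I. s mod n \<in> A}"
    define Bad where "Bad = {s\<in>I. s mod n \<notin> A}"
    define N where "N = {p. p < n \<and> p \<notin> A}"
    have NH: "N \<subseteq> {p. p < n \<and> \<not> honest E p}"
      unfolding N_def A_def honest_def using assms(11) by auto
    have cN: "card N \<le> f" using card_mono[OF _ NH] cardH by simp
    have bad_sub: "(\<lambda>s. s mod n) ` Bad \<subseteq> N" unfolding Bad_def N_def using npos by auto
    have cBad: "card Bad \<le> f"
    proof (cases "f = 0")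
      case True
      then have "N = {}" using cN by (simp add: N_def)
      then have "Bad = {}" using bad_sub by auto
      then show ?thesis by simp
    next
      case False
      have inj: "inj_on (\<lambda>s. s mod n) Bad"
      proof (rule inj_onI)
        fix x y assume x: "x \<in> Bad" and y: "y \<in> Bad" and eq: "x mod n = y mod n"
        have xr: "R + 1 \<le> x" "x \<le> R + f + 2" and yr: "R + 1 \<le> y" "y \<le> R + f + 2"
          using x y unfolding Bad_def I_def by auto
        have fn: "f + 2 \<le> n" using False assms(1) by simp
        show "x = y"
        proof (rule ccontr)
          assume "x \<noteq> y"
          then consider "x < y" | "y < x" by linarith
          then show False
          proof cases
            case 1
            have "n dvd (y - x)" using eq 1 by (metis mod_eq_dvd_iff_nat less_imp_le)
            moreover have "0 < y - x" "y - x < n" using 1 xr yr fn by auto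
            ultimately show False using nat_dvd_not_less by blast
          next
            case 2
            have "n dvd (x - y)" using eq 2 by (metis mod_eq_dvd_iff_nat less_imp_le)
            moreover have "0 < x - y" "x - y < n" using 2 xr yr fn by auto
            ultimately show False using nat_dvd_not_less by blast
          qed
        qed
      qed
      have "card Bad = card ((\<lambda>s. s mod n) ` Bad)" using card_image[OF inj] by simp
      also have "\<dots> \<le> card N" using card_mono[OF _ bad_sub] unfolding N_def by simp
      finally show ?thesis using cN by simp
    qed
    have GI: "G = I - Bad" unfolding G_def Bad_def by auto
    have cI: "card I = f + 2" unfolding I_def by simp
    have "card G = card I - card Bad" unfolding GI
      by (rule card_Diff_subset) (auto simp: Bad_def I_def)
    then have cG: "2 \<le> card G" using cI cBad by simp
    then have "G \<noteq> {}" by auto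
    then obtain x where xG: "x \<in> G" by blast
    have "card (G - {x}) \<ge> 1" using cG xG by (simp add: card_Diff_singleton_if)
    then have "G - {x} \<noteq> {}" by (intro notI) simp
    then obtain y where yG: "y \<in> G" and xy: "y \<noteq> x" by blast
    define s1 where "s1 = min x y"
    define s2 where "s2 = max x y"
    have s1G: "s1 \<in> G" and s2G: "s2 \<in> G" and s12: "s1 < s2"
      using xG yG xy unfolding s1_def s2_def by (auto simp: min_def max_def)
    have s1r: "R + 1 \<le> s1" "s1 \<le> R + f + 2" "s1 mod n \<in> A"
      using s1G unfolding G_def I_def by auto
    have s2r: "R + 1 \<le> s2" "s2 \<le> R + f + 2" "s2 mod n \<in> A"
      using s2G unfolding G_def I_def by auto
    have nc1: "noCert s1" using lemX[OF s1r(1,2) ng s1r(3)] s1r by simp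
    have ind: "\<And>k. s1 + Suc k \<le> s2 \<Longrightarrow>
        noCert (s1 + k) \<and> (\<forall>p\<in>A. leader E p (s1 + Suc k) = (s1 + Suc k) mod n)"
    proof -
      fix k show "s1 + Suc k \<le> s2 \<Longrightarrow>
        noCert (s1 + k) \<and> (\<forall>p\<in>A. leader E p (s1 + Suc k) = (s1 + Suc k) mod n)"
      proof (induction k)
        case 0
        then show ?case using nc1 lemY[of s1] s1r s2r by simp
      next
        case (Suc k)
        then have IH: "\<forall>p\<in>A. leader E p (s1 + Suc k) = (s1 + Suc k) mod n" by simp
        have "noCert (s1 + Suc k)"
          using lemZ[of "s1 + Suc k"] IH ng[of "s1 + Suc k"] s1r s2r Suc.prems by simp
        moreover have "\<forall>p\<in>A. leader E p (Suc (s1 + Suc k)) = Suc (s1 + Suc k) mod n"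
          using lemY[of "s1 + Suc k"] calculation s1r s2r Suc.prems by simp
        ultimately show ?case by simp
      qed
    qed
    have "s1 + Suc (s2 - s1 - 1) = s2" using s12 by simp
    then have "\<forall>p\<in>A. leader E p s2 = s2 mod n" using ind[of "s2 - s1 - 1"] by simp
    then have "good s2" using good_agree s2r by blast
    then show False using ng s2r by simp
  qed
qed

end
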